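(* Let $S>0$ and let $D=(D[1],\dots,D[n])$ be a vector of demands with $0<D[i]\le S$ for all $i$. Then there exists an integer $k$ with $1\le k\le a(n)$ such that the egalitarian connection-time of the electricity division instance $(S,D)$ equals $\frac{k}{OPT(D_k)}$. Moreover, this value is attained by taking an optimal $k$-times bin packing of $D$ (with $OPT(D_k)$ bins) and connecting the set of households in each bin during a fraction $\frac{1}{OPT(D_k)}$ of the time interval (the bins being connected during pairwise disjoint subintervals).
   Context: Electricity division: there is a supply $S>0$, $n$ households with demands $D[1],\dots,D[n]$, and a time interval $[0,T]$. A schedule is a partition of $[0,T]$ into finitely many subintervals $I_1,\dots,I_p$ together with sets $A_1,\dots,A_p\subseteq\{1,\dots,n\}$ such that $\sum_{i\in A_l}D[i]\le S$ for each $l$; household $i$ receives connection time $u_i=\sum_{l:\,i\in A_l}|I_l|$. The egalitarian connection-time is $\max_{\text{schedules}}\min_i u_i/T$ (the largest fraction of the time that every household can simultaneously be guaranteed). $k$-times bin packing: given a bin capacity $S$, items $1,\dots,n$ with sizes $D[i]$, and an integer $k\ge1$, $D_k$ denotes the collection of $k$ copies of each item; a $k$-times bin packing is an assignment of all copies in $D_k$ to bins such that the total size in each bin is at most $S$ and no bin contains two copies of the same item (so each item lies in exactly $k$ distinct bins). $OPT(D_k)$ is the minimum number of bins of a $k$-times bin packing. For a positive integer $n$, $a(n)$ denotes the maximum determinant of an $n\times n$ matrix all of whose entries are $0$ or $1$. *)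

theory Defs
  imports Main "Jordan_Normal_Form.Determinant"
begin

definition feasible_set :: "real \<Rightarrow> (nat \<Rightarrow> real) \<Rightarrow> nat \<Rightarrow> nat set \<Rightarrow> bool" where
  "feasible_set S D n A \<longleftrightarrow> A \<subseteq> {1..n} \<and> (\<Sum>i\<in>A. D i) \<le> S"

text \<open>A schedule: a finite list of consecutive subintervals of [0,T], given by their
  (positive) lengths, which sum to T, each with a feasible set of connected households.\<close>
definition is_schedule :: "real \<Rightarrow> (nat \<Rightarrow> real) \<Rightarrow> nat \<Rightarrow> real \<Rightarrow> (real \<times> nat set) list \<Rightarrow> bool" where
  "is_schedule S D n T sch \<longleftrightarrow>
     (\<forall>(l, A) \<in> set sch. l > 0 \<and> feasible_set S D n A) \<and> sum_list (map fst sch) = T"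

definition conn_time :: "(real \<times> nat set) list \<Rightarrow> nat \<Rightarrow> real" where
  "conn_time sch i = sum_list (map fst (filter (\<lambda>(l, A). i \<in> A) sch))"

definition egal_conn_time :: "real \<Rightarrow> (nat \<Rightarrow> real) \<Rightarrow> nat \<Rightarrow> real \<Rightarrow> real" where
  "egal_conn_time S D n T =
     Sup {(MIN i\<in>{1..n}. conn_time sch i) / T | sch. is_schedule S D n T sch}"

text \<open>k-times bin packing: a list of bins; each bin is a set of items (no two copies of
  the same item in a bin), fits the capacity, and each item lies in exactly k bins.\<close>
definition is_k_packing :: "real \<Rightarrow> (nat \<Rightarrow> real) \<Rightarrow> nat \<Rightarrow> nat \<Rightarrow> nat set list \<Rightarrow> bool" where
  "is_k_packing S D n k B \<longleftrightarrow>
     (\<forall>b\<in>set B. feasible_set S D n b) \<and>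
     (\<forall>i\<in>{1..n}. card {j. j < length B \<and> i \<in> B ! j} = k)"

definition OPT :: "real \<Rightarrow> (nat \<Rightarrow> real) \<Rightarrow> nat \<Rightarrow> nat \<Rightarrow> nat" where
  "OPT S D n k = (LEAST m. \<exists>B. is_k_packing S D n k B \<and> length B = m)"

text \<open>a(n): maximum determinant of an n x n 0/1 matrix.\<close>
definition maxdet01 :: "nat \<Rightarrow> int" where
  "maxdet01 n = Max (det ` {A :: int mat. A \<in> carrier_mat n n \<and>
       (\<forall>i<n. \<forall>j<n. A $$ (i, j) \<in> {0, 1})})"

end

theory Submission imports Defs "HOL-Library.Function_Algebras" "HOL-Library.FuncSet" begin

definition sc :: "real \<Rightarrow> (nat \<Rightarrow> real) \<Rightarrow> (nat \<Rightarrow> real)" where "sc c f = (\<lambda>x. c * f x)"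

interpretation fv: vector_space sc
  by unfold_locales (auto simp: sc_def algebra_simps fun_eq_iff)

definition chi :: "nat set \<Rightarrow> nat \<Rightarrow> real" where
  "chi A = (\<lambda>i. if i \<in> A then 1 else 0)"

lemma fun_sum_apply: "(\<Sum>v\<in>t. (f v :: nat \<Rightarrow> real)) x = (\<Sum>v\<in>t. f v x)"
  by (induction t rule: infinite_finite_induct) (auto simp: func_plus func_zero)

lemma dep_coeffs:
  assumes inj: "inj_on chi G" and fin: "finite G" and dep: "fv.dependent (chi ` G)"
  shows "\<exists>z. (\<forall>A. A \<notin> G \<longrightarrow> z A = 0) \<and> (\<exists>A\<in>G. z A \<noteq> 0) \<and> (\<forall>i. (\<Sum>A\<in>G. z A * chi A i) = 0)"
proof -
  obtain t u v0 where t: "finite t" "t \<subseteq> chi ` G" and s: "(\<Sum>v\<in>t. sc (u v) v) = 0"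
    and v0: "v0 \<in> t" "u v0 \<noteq> 0"
    using dep unfolding fv.dependent_explicit by (elim exE conjE bexE) (rule that, assumption+)
  define G1 where "G1 = {A\<in>G. chi A \<in> t}"
  have G1t: "chi ` G1 = t" using t(2) unfolding G1_def by auto
  have inj1: "inj_on chi G1" using inj unfolding G1_def by (auto intro: inj_on_subset)
  define z where "z A = (if A \<in> G1 then u (chi A) else 0)" for A
  have "\<forall>A. A \<notin> G \<longrightarrow> z A = 0" unfolding z_def G1_def by auto
  moreover have "\<exists>A\<in>G. z A \<noteq> 0"
  proof -
    obtain A where "A \<in> G1" "chi A = v0" using G1t v0 by auto
    then show ?thesis using v0 unfolding z_def G1_def by auto
  qed
  moreover have "(\<Sum>A\<in>G. z A * chi A i) = 0" for i
  proof -
    have "(\<Sum>A\<in>G. z A * chi A i) = (\<Sum>A\<in>G1. u (chi A) * chi A i)"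
      unfolding z_def using fin G1_def
      by (intro sum.mono_neutral_cong_right) auto
    also have "\<dots> = (\<Sum>v\<in>t. u v * v i)"
      using sum.reindex[OF inj1, of "\<lambda>v. u v * v i"] G1t by simp
    also have "\<dots> = (\<Sum>v\<in>t. sc (u v) v) i" by (simp add: fun_sum_apply sc_def)
    also have "\<dots> = 0" using s by (simp add: func_zero)
    finally show ?thesis .
  qed
  ultimately show ?thesis by blast
qed

lemma coeffs_dep:
  assumes inj: "inj_on chi G" and fin: "finite G" and A0: "A0 \<in> G" "z A0 \<noteq> 0"
    and s: "\<forall>i. (\<Sum>A\<in>G. z A * chi A i) = 0"
  shows "fv.dependent (chi ` G)"
  unfolding fv.dependent_explicit
proof (intro exI conjI)
  let ?u = "\<lambda>v. z (the_inv_into G chi v)"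
  show "finite (chi ` G)" using fin by simp
  show "chi ` G \<subseteq> chi ` G" by simp
  have "(\<Sum>v\<in>chi ` G. sc (?u v) v) = (\<Sum>A\<in>G. sc (z A) (chi A))"
    using sum.reindex[OF inj, of "\<lambda>v. sc (?u v) v"] the_inv_into_f_f[OF inj]
    by (auto intro: sum.cong)
  also have "\<dots> = 0"
    using s by (auto simp: fun_eq_iff fun_sum_apply sc_def func_zero)
  finally show "(\<Sum>v\<in>chi ` G. sc (?u v) v) = 0" .
  show "\<exists>v\<in>chi ` G. ?u v \<noteq> 0"
    using A0 the_inv_into_f_f[OF inj] by auto
qed

lemma nonneg_zero:
  assumes "finite F" "\<forall>A\<in>F. A \<noteq> {}" "\<forall>A\<in>F. w A \<ge> 0"
    "\<forall>i. (\<Sum>A\<in>F. w A * chi A i) = 0" "A \<in> F"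
  shows "w A = 0"
proof -
  obtain i where i: "i \<in> A" using assms(2,5) by blast
  have "\<forall>B\<in>F. w B * chi B i = 0"
    using sum_nonneg_eq_0_iff[of F "\<lambda>B. w B * chi B i"] assms(1,3,4)
    by (auto simp: chi_def)
  then show ?thesis using assms(5) i by (auto simp: chi_def)
qed

lemma reduce:
  fixes F :: "nat set set"
  assumes fin: "finite F" and ne: "\<forall>A\<in>F. A \<noteq> {}" and inj: "inj_on chi F"
  shows "(\<forall>A\<in>F. y A \<ge> 0) \<Longrightarrow> (\<forall>i. (\<Sum>A\<in>F. y A * chi A i) = b i) \<Longrightarrow>
    \<exists>y'. (\<forall>A\<in>F. y' A \<ge> 0) \<and> (\<forall>i. (\<Sum>A\<in>F. y' A * chi A i) = b i) \<and>
      (\<Sum>A\<in>F. y' A) \<le> (\<Sum>A\<in>F. y A) \<and> fv.independent (chi ` {A\<in>F. y' A \<noteq> 0})"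
proof (induction "card {A\<in>F. y A \<noteq> 0}" arbitrary: y rule: less_induct)
  case less
  let ?G = "{A\<in>F. y A \<noteq> 0}"
  show ?case
  proof (cases "fv.independent (chi ` ?G)")
    case True
    then show ?thesis using less.prems by blast
  next
    case False
    have injG: "inj_on chi ?G" using inj by (rule inj_on_subset) auto
    have finG: "finite ?G" using fin by simp
    obtain z where z1: "\<forall>A. A \<notin> ?G \<longrightarrow> z A = 0" and z2: "\<exists>A\<in>?G. z A \<noteq> 0"
      and z3: "\<forall>i. (\<Sum>A\<in>?G. z A * chi A i) = 0"
      using dep_coeffs[OF injG finG] False by blast
    have zF: "(\<Sum>A\<in>F. z A * chi A i) = 0" for i
    proof -
      have "(\<Sum>A\<in>F. z A * chi A i) = (\<Sum>A\<in>?G. z A * chi A i)"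
        using fin z1 by (intro sum.mono_neutral_right) auto
      then show ?thesis using z3 by simp
    qed
    obtain w where w1: "\<forall>A. A \<notin> ?G \<longrightarrow> w A = 0" and w2: "\<forall>i. (\<Sum>A\<in>F. w A * chi A i) = 0"
      and w3: "(\<Sum>A\<in>F. w A) \<le> 0" and w4: "\<exists>A\<in>?G. w A \<noteq> 0"
    proof (cases "(\<Sum>A\<in>F. z A) \<le> 0")
      case True
      then show ?thesis using that[of z] z1 z2 zF by blast
    next
      case False
      have "(\<Sum>A\<in>F. - z A * chi A i) = 0" for i
        using zF[of i] by (simp add: sum_negf)
      moreover have "(\<Sum>A\<in>F. - z A) \<le> 0" using False by (simp add: sum_negf)
      ultimately show ?thesis using that[of "\<lambda>A. - z A"] z1 z2 by auto
    qed
    have "\<exists>A\<in>F. w A < 0"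
    proof (rule ccontr)
      assume "\<not> ?thesis"
      then have "\<forall>A\<in>F. w A \<ge> 0" by (auto simp: not_less)
      then have "\<forall>A\<in>F. w A = 0" using nonneg_zero[OF fin ne _ w2] by blast
      then show False using w4 by auto
    qed
    define Q where "Q = {A\<in>F. w A < 0}"
    define f where "f A = y A / (- w A)" for A
    have Qfin: "finite Q" "Q \<noteq> {}" using fin \<open>\<exists>A\<in>F. w A < 0\<close> unfolding Q_def by auto
    obtain A0 where A0: "A0 \<in> Q" "f A0 = Min (f ` Q)"
    proof -
      have "Min (f ` Q) \<in> f ` Q" using Min_in[of "f ` Q"] Qfin by auto
      then show ?thesis using that by (metis (no_types, lifting) imageE)
    qed
    have A0min: "f A0 \<le> f A" if "A \<in> Q" for A
      using A0(2) Min_le[of "f ` Q"] Qfin that by auto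
    define t where "t = f A0"
    have t0: "t \<ge> 0" using A0(1) less.prems(1) unfolding t_def f_def Q_def by (auto simp: divide_nonneg_neg)
    define y' where "y' A = y A + t * w A" for A
    have y'nn: "\<forall>A\<in>F. y' A \<ge> 0"
    proof
      fix A assume A: "A \<in> F"
      show "y' A \<ge> 0"
      proof (cases "w A < 0")
        case True
        then have "t \<le> y A / (- w A)" using A0min[of A] A unfolding t_def f_def Q_def by auto
        moreover have c: "0 < - w A" using True by simp
        ultimately have "t * (- w A) \<le> y A" using pos_le_divide_eq[OF c] by blast
        then show ?thesis unfolding y'_def by simp
      next
        case False
        then show ?thesis using t0 less.prems(1) A unfolding y'_def by simp
      qed
    qed
    have y'comb: "\<forall>i. (\<Sum>A\<in>F. y' A * chi A i) = b i"
    proof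
      fix i
      have "(\<Sum>A\<in>F. y' A * chi A i) = (\<Sum>A\<in>F. y A * chi A i) + t * (\<Sum>A\<in>F. w A * chi A i)"
        unfolding y'_def by (simp add: algebra_simps sum.distrib sum_distrib_left)
      then show "(\<Sum>A\<in>F. y' A * chi A i) = b i" using w2 less.prems(2) by simp
    qed
    have y'cost: "(\<Sum>A\<in>F. y' A) \<le> (\<Sum>A\<in>F. y A)"
    proof -
      have "(\<Sum>A\<in>F. y' A) = (\<Sum>A\<in>F. y A) + t * (\<Sum>A\<in>F. w A)"
        unfolding y'_def by (simp add: sum.distrib sum_distrib_left)
      moreover have "t * (\<Sum>A\<in>F. w A) \<le> 0" using t0 w3 by (simp add: mult_nonneg_nonpos)
      ultimately show ?thesis by simp
    qed
    have A0G: "A0 \<in> ?G" using A0(1) w1 unfolding Q_def by auto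
    have "y' A0 = 0" using A0(1) unfolding y'_def t_def f_def Q_def by auto
    then have sub: "{A\<in>F. y' A \<noteq> 0} \<subset> ?G"
      using A0G w1 unfolding y'_def by auto
    then have "card {A\<in>F. y' A \<noteq> 0} < card ?G" using finG psubset_card_mono by blast
    from less.hyps[OF this y'nn y'comb] obtain y'' where
      "(\<forall>A\<in>F. y'' A \<ge> 0) \<and> (\<forall>i. (\<Sum>A\<in>F. y'' A * chi A i) = b i) \<and>
      (\<Sum>A\<in>F. y'' A) \<le> (\<Sum>A\<in>F. y' A) \<and> fv.independent (chi ` {A\<in>F. y'' A \<noteq> 0})" by blast
    then show ?thesis using y'cost by (intro exI[of _ y'']) auto
  qed
qed


lemma chi_inj: "inj chi"
proof (rule injI)
  fix A B assume "chi A = chi B"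
  then have "\<forall>i. (i \<in> A) = (i \<in> B)" unfolding chi_def by (metis one_neq_zero)
  then show "A = B" by blast
qed

definition Z01 :: "nat \<Rightarrow> int mat set" where
  "Z01 n = {A :: int mat. A \<in> carrier_mat n n \<and> (\<forall>i<n. \<forall>j<n. A $$ (i, j) \<in> {0, 1})}"

lemma Z01_fin: "finite (Z01 n)"
proof (rule inj_on_finite)
  let ?f = "\<lambda>A::int mat. restrict (\<lambda>p. A $$ p) ({..<n} \<times> {..<n})"
  show "inj_on ?f (Z01 n)"
  proof (rule inj_onI)
    fix A B assume A: "A \<in> Z01 n" and B: "B \<in> Z01 n" and e: "?f A = ?f B"
    show "A = B"
    proof (rule eq_matI)
      fix i j assume "i < dim_row B" "j < dim_col B"
      then have "i < n" "j < n" using B by (auto simp: Z01_def)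
      then show "A $$ (i, j) = B $$ (i, j)" using fun_cong[OF e, of "(i,j)"] by auto
    qed (use A B in \<open>auto simp: Z01_def\<close>)
  qed
  show "?f ` Z01 n \<subseteq> PiE ({..<n} \<times> {..<n}) (\<lambda>_. {0,1})"
  proof
    fix F assume "F \<in> ?f ` Z01 n"
    then obtain A where A: "A \<in> Z01 n" "F = ?f A" by blast
    have h: "\<forall>i<n. \<forall>j<n. A $$ (i, j) \<in> {0, 1}" using A(1) by (simp add: Z01_def)
    show "F \<in> PiE ({..<n} \<times> {..<n}) (\<lambda>_. {0,1})"
      unfolding A(2) restrict_PiE_iff
    proof
      fix p assume "p \<in> {..<n} \<times> {..<n}"
      then obtain i j where "p = (i,j)" "i < n" "j < n" by blast
      then show "A $$ p \<in> {0,1}" using h by blast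
    qed
  qed
  show "finite (PiE ({..<n} \<times> {..<n}) (\<lambda>_. {0::int,1}))"
    by (rule finite_PiE) auto
qed

lemma maxdet01_alt: "maxdet01 n = Max (det ` Z01 n)"
  unfolding maxdet01_def Z01_def by simp

lemma det_bound:
  assumes M: "M \<in> Z01 n" and n1: "n \<ge> 1"
  shows "\<bar>det M\<bar> \<le> maxdet01 n"
proof (cases "det M \<ge> 0")
  case True
  then show ?thesis unfolding maxdet01_alt using Z01_fin M by simp
next
  case False
  show ?thesis
  proof (cases "n = 1")
    case True
    have Mc: "M \<in> carrier_mat 1 1" using M True by (simp add: Z01_def)
    have "upper_triangular M" using Mc by (auto simp: upper_triangular_def)
    then have "det M = prod_list (diag_mat M)" using det_upper_triangular Mc by blast
    also have "\<dots> = M $$ (0,0)" using Mc by (simp add: diag_mat_def)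
    finally have "det M \<ge> 0" using M True by (auto simp: Z01_def)
    then show ?thesis using False by simp
  next
    case False2: False
    then have n2: "1 < n" using n1 by simp
    have Mc: "M \<in> carrier_mat n n" using M by (simp add: Z01_def)
    have h: "\<forall>i<n. \<forall>j<n. M $$ (i, j) \<in> {0, 1}" using M by (simp add: Z01_def)
    have "swaprows 0 1 M \<in> carrier_mat n n" using Mc by simp
    moreover have "\<forall>i<n. \<forall>j<n. swaprows 0 1 M $$ (i, j) \<in> {0, 1}"
    proof (intro allI impI)
      fix i j assume ij: "i < n" "j < n"
      have "M $$ (0,j) \<in> {0,1}" "M $$ (1,j) \<in> {0,1}" "M $$ (i,j) \<in> {0,1}"
        using h ij n2 by blast+
      then show "swaprows 0 1 M $$ (i, j) \<in> {0, 1}" using ij Mc by simp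
    qed
    ultimately have "swaprows 0 1 M \<in> Z01 n" by (simp add: Z01_def)
    moreover have "det (swaprows 0 1 M) = - det M"
      using det_swaprows[of 0 n 1 M] n2 Mc by simp
    ultimately show ?thesis unfolding maxdet01_alt using Z01_fin False
      by (metis Max_ge abs_of_neg finite_imageI image_eqI not_le)
  qed
qed

lemma smf: "(\<And>x. x \<in> set xs \<Longrightarrow> \<not> P x \<Longrightarrow> f x = (0::real)) \<Longrightarrow>
  sum_list (map f (filter P xs)) = sum_list (map f xs)"
  by (induction xs) auto

lemma smf_le: "(\<And>x. x \<in> set xs \<Longrightarrow> f x \<ge> (0::real)) \<Longrightarrow>
  sum_list (map f (filter P xs)) \<le> sum_list (map f xs)"
  by (induction xs) (auto simp: add_increasing)

lemma regroup_count:
  fixes xs :: "nat set list" and f :: "nat set \<Rightarrow> real"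
  assumes "finite F"
  shows "(\<Sum>A\<in>F. real (count_list xs A) * f A) = sum_list (map f (filter (\<lambda>b. b \<in> F) xs))"
proof (induction xs)
  case Nil
  then show ?case by simp
next
  case (Cons a xs)
  have "(\<Sum>A\<in>F. real (count_list (a#xs) A) * f A) =
        (\<Sum>A\<in>F. real (count_list xs A) * f A + (if a = A then f A else 0))"
    by (intro sum.cong) (auto simp: algebra_simps)
  also have "\<dots> = (\<Sum>A\<in>F. real (count_list xs A) * f A) + (\<Sum>A\<in>F. if a = A then f A else 0)"
    by (rule sum.distrib)
  also have "(\<Sum>A\<in>F. if a = A then f A else 0) = (if a \<in> F then f a else 0)"
    using assms by simp
  finally show ?case using Cons by simp
qed

lemma regroup_pairs:
  fixes xs :: "(real \<times> nat set) list" and f :: "nat set \<Rightarrow> real"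
  assumes "finite F"
  shows "(\<Sum>A\<in>F. sum_list (map fst (filter (\<lambda>p. snd p = A) xs)) * f A) =
    sum_list (map (\<lambda>p. fst p * f (snd p)) (filter (\<lambda>p. snd p \<in> F) xs))"
proof (induction xs)
  case Nil
  then show ?case by simp
next
  case (Cons a xs)
  have "(\<Sum>A\<in>F. sum_list (map fst (filter (\<lambda>p. snd p = A) (a#xs))) * f A) =
        (\<Sum>A\<in>F. sum_list (map fst (filter (\<lambda>p. snd p = A) xs)) * f A + (if snd a = A then fst a * f A else 0))"
    by (intro sum.cong) (auto simp: algebra_simps)
  also have "\<dots> = (\<Sum>A\<in>F. sum_list (map fst (filter (\<lambda>p. snd p = A) xs)) * f A) +
      (\<Sum>A\<in>F. if snd a = A then fst a * f A else 0)"
    by (rule sum.distrib)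
  also have "(\<Sum>A\<in>F. if snd a = A then fst a * f A else 0) = (if snd a \<in> F then fst a * f (snd a) else 0)"
    using assms by simp
  finally show ?case using Cons by simp
qed

lemma chi_list: "sum_list (map (\<lambda>b. chi b i) xs) = real (length (filter (\<lambda>b. i \<in> b) xs))"
  by (induction xs) (auto simp: chi_def)

lemma conn_chi: "conn_time xs i = sum_list (map (\<lambda>p. fst p * chi (snd p) i) xs)"
  by (induction xs) (auto simp: conn_time_def chi_def)

lemma conn_const: "conn_time (map (\<lambda>b. ((c::real), b)) B) i = c * real (length (filter (\<lambda>b. i \<in> b) B))"
  by (induction B) (auto simp: conn_time_def algebra_simps)

lemma conn_scale: "conn_time (map (\<lambda>(l,A). ((c::real) * l, A)) s) i = c * conn_time s i"
  by (induction s) (auto simp: conn_time_def algebra_simps)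

lemma val_scale: "sum_list (map fst (map (\<lambda>(l,A). ((c::real) * l, A)) s)) = c * sum_list (map fst s)"
  by (induction s) (auto simp: algebra_simps)

lemma val_const: "sum_list (map fst (map (\<lambda>b. ((c::real), b)) B)) = c * real (length B)"
  by (induction B) (auto simp: algebra_simps)

definition ex1 :: "nat \<Rightarrow> real \<Rightarrow> (real \<times> nat set) list \<Rightarrow> (real \<times> nat set) list" where
  "ex1 i lam xs = concat (map (\<lambda>(w,A). if i \<in> A then [((1-lam)*w, A), (lam*w, A - {i})] else [(w,A)]) xs)"

lemma ex1_Nil[simp]: "ex1 i lam [] = []" by (simp add: ex1_def)
lemma ex1_Cons: "ex1 i lam ((w,A)#xs) = (if i \<in> A then [((1-lam)*w, A), (lam*w, A - {i})] else [(w,A)]) @ ex1 i lam xs"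
  by (simp add: ex1_def)

lemma ex1_val: "sum_list (map fst (ex1 i lam xs)) = sum_list (map fst xs)"
  by (induction xs) (auto simp: ex1_Cons algebra_simps)

lemma ex1_other: "j \<noteq> i \<Longrightarrow> conn_time (ex1 i lam xs) j = conn_time xs j"
  by (induction xs) (auto simp: ex1_Cons conn_time_def algebra_simps)

lemma ex1_same: "conn_time (ex1 i lam xs) i = (1 - lam) * conn_time xs i"
  by (induction xs) (auto simp: ex1_Cons conn_time_def algebra_simps)

lemma ex1_nonneg: "(\<forall>p\<in>set xs. fst p \<ge> 0) \<Longrightarrow> 0 \<le> lam \<Longrightarrow> lam \<le> 1 \<Longrightarrow> \<forall>p\<in>set (ex1 i lam xs). fst p \<ge> 0"
proof (induction xs)
  case (Cons a xs)
  obtain w A where a: "a = (w, A)" by fastforce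
  show ?case
  proof
    fix p assume "p \<in> set (ex1 i lam (a # xs))"
    then have "p \<in> set (if i \<in> A then [((1-lam)*w, A), (lam*w, A - {i})] else [(w,A)]) \<or> p \<in> set (ex1 i lam xs)"
      unfolding a ex1_Cons by simp
    then show "fst p \<ge> 0"
    proof
      assume "p \<in> set (if i \<in> A then [((1-lam)*w, A), (lam*w, A - {i})] else [(w,A)])"
      moreover have "w \<ge> 0" using Cons.prems(1) a by auto
      ultimately show ?thesis using Cons.prems(2,3) by (auto split: if_split_asm)
    next
      assume "p \<in> set (ex1 i lam xs)"
      then show ?thesis using Cons by auto
    qed
  qed
qed simp

lemma ex1_sub: "\<forall>p\<in>set (ex1 i lam xs). \<exists>q\<in>set xs. snd p \<subseteq> snd q"
proof (induction xs)
  case (Cons a xs)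
  obtain w A where a: "a = (w, A)" by fastforce
  show ?case
  proof
    fix p assume "p \<in> set (ex1 i lam (a # xs))"
    then have "p \<in> set (if i \<in> A then [((1-lam)*w, A), (lam*w, A - {i})] else [(w,A)]) \<or> p \<in> set (ex1 i lam xs)"
      unfolding a ex1_Cons by simp
    then show "\<exists>q\<in>set (a # xs). snd p \<subseteq> snd q"
    proof
      assume "p \<in> set (if i \<in> A then [((1-lam)*w, A), (lam*w, A - {i})] else [(w,A)])"
      then have "snd p \<subseteq> snd a" unfolding a by (auto split: if_split_asm)
      then show ?thesis by auto
    next
      assume "p \<in> set (ex1 i lam xs)"
      then show ?thesis using Cons by auto
    qed
  qed
qed simp

lemma exactify_aux:
  assumes nn: "\<forall>p\<in>set xs. fst p \<ge> 0" and cov: "\<forall>i\<in>{1..n}. conn_time xs i \<ge> 1"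
  shows "\<exists>ys. (\<forall>p\<in>set ys. fst p \<ge> 0) \<and> sum_list (map fst ys) = sum_list (map fst xs) \<and>
    (\<forall>p\<in>set ys. \<exists>q\<in>set xs. snd p \<subseteq> snd q) \<and>
    (\<forall>i\<in>{1..n}. i \<le> m \<longrightarrow> conn_time ys i = 1) \<and> (\<forall>i\<in>{1..n}. conn_time ys i \<ge> 1)"
proof (induction m)
  case 0
  show ?case using nn cov by (intro exI[of _ xs]) auto
next
  case (Suc m)
  then obtain ys where ys: "\<forall>p\<in>set ys. fst p \<ge> 0" "sum_list (map fst ys) = sum_list (map fst xs)"
    "\<forall>p\<in>set ys. \<exists>q\<in>set xs. snd p \<subseteq> snd q"
    "\<forall>i\<in>{1..n}. i \<le> m \<longrightarrow> conn_time ys i = 1" "\<forall>i\<in>{1..n}. conn_time ys i \<ge> 1" by blast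
  show ?case
  proof (cases "Suc m \<in> {1..n}")
    case False
    then show ?thesis using ys by (intro exI[of _ ys]) (auto simp: le_Suc_eq)
  next
    case True
    define c where "c = conn_time ys (Suc m)"
    have c1: "c \<ge> 1" using ys(5) True unfolding c_def by blast
    define lam where "lam = 1 - 1 / c"
    have lam: "0 \<le> lam" "lam \<le> 1" using c1 unfolding lam_def by auto
    define zs where "zs = ex1 (Suc m) lam ys"
    have "\<forall>p\<in>set zs. fst p \<ge> 0" unfolding zs_def using ex1_nonneg[OF ys(1) lam] .
    moreover have "sum_list (map fst zs) = sum_list (map fst xs)" unfolding zs_def ex1_val ys(2) ..
    moreover have "\<forall>p\<in>set zs. \<exists>q\<in>set xs. snd p \<subseteq> snd q"
      using ex1_sub[of "Suc m" lam ys] ys(3) unfolding zs_def by (meson order_trans)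
    moreover have zsm: "conn_time zs (Suc m) = 1"
      unfolding zs_def ex1_same lam_def c_def[symmetric] using c1 by simp
    moreover have "\<forall>i\<in>{1..n}. i \<le> Suc m \<longrightarrow> conn_time zs i = 1"
      using ys(4) zsm unfolding zs_def by (auto simp: le_Suc_eq ex1_other)
    moreover have "\<forall>i\<in>{1..n}. conn_time zs i \<ge> 1"
      using ys(5) zsm unfolding zs_def by (metis ex1_other order_refl)
    ultimately show ?thesis by blast
  qed
qed

locale inst =
  fixes S :: real and D :: "nat \<Rightarrow> real" and n :: nat
  assumes Spos: "S > 0" and n1: "n \<ge> 1" and Dpos: "\<forall>i\<in>{1..n}. 0 < D i \<and> D i \<le> S"
begin

definition FF :: "nat set set" where
  "FF = {A. A \<subseteq> {1..n} \<and> A \<noteq> {} \<and> (\<Sum>i\<in>A. D i) \<le> S}"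

lemma FF_fin: "finite FF"
  by (rule finite_subset[of _ "Pow {1..n}"]) (auto simp: FF_def)

lemma FF_ne: "\<forall>A\<in>FF. A \<noteq> {}" by (auto simp: FF_def)

lemma FF_inj: "inj_on chi FF" using chi_inj by (rule inj_on_subset) simp

lemma single_FF: "i \<in> {1..n} \<Longrightarrow> {i} \<in> FF"
  using Dpos by (auto simp: FF_def)

definition exact :: "(nat set \<Rightarrow> real) \<Rightarrow> bool" where
  "exact y \<longleftrightarrow> (\<forall>A\<in>FF. y A \<ge> 0) \<and> (\<forall>i. (\<Sum>A\<in>FF. y A * chi A i) = chi {1..n} i)"

definition supp :: "(nat set \<Rightarrow> real) \<Rightarrow> nat set set" where
  "supp y = {A\<in>FF. y A \<noteq> 0}"

definition Vals :: "real set" where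
  "Vals = {(\<Sum>A\<in>FF. y A) | y. exact y \<and> fv.independent (chi ` supp y)}"

lemma exact_unique:
  assumes "exact y1" "exact y2" "supp y1 = supp y2" "fv.independent (chi ` supp y1)"
  shows "\<forall>A\<in>FF. y1 A = y2 A"
proof (rule ccontr)
  assume "\<not> ?thesis"
  then obtain A0 where A0: "A0 \<in> FF" "y1 A0 \<noteq> y2 A0" by auto
  let ?G = "supp y1"
  define z where "z A = y1 A - y2 A" for A
  have A0G: "A0 \<in> ?G"
  proof (rule ccontr)
    assume "A0 \<notin> ?G"
    then have "A0 \<notin> supp y2" using assms(3) by simp
    then have "y1 A0 = 0" "y2 A0 = 0" using A0(1) \<open>A0 \<notin> ?G\<close> unfolding supp_def by auto
    then show False using A0(2) by simp
  qed
  have "(\<Sum>A\<in>?G. z A * chi A i) = 0" for i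
  proof -
    have "(\<Sum>A\<in>?G. z A * chi A i) = (\<Sum>A\<in>FF. z A * chi A i)"
    proof (rule sum.mono_neutral_left[OF FF_fin])
      show "?G \<subseteq> FF" unfolding supp_def by auto
      show "\<forall>A\<in>FF - ?G. z A * chi A i = 0"
      proof
        fix A assume "A \<in> FF - ?G"
        then have "y1 A = 0" "y2 A = 0" using assms(3) unfolding supp_def by blast+
        then show "z A * chi A i = 0" unfolding z_def by simp
      qed
    qed
    also have "\<dots> = (\<Sum>A\<in>FF. y1 A * chi A i) - (\<Sum>A\<in>FF. y2 A * chi A i)"
      unfolding z_def by (simp add: algebra_simps sum_subtractf)
    also have "\<dots> = 0" using assms(1,2) unfolding exact_def by simp
    finally show ?thesis .
  qed
  moreover have "inj_on chi ?G" using FF_inj by (rule inj_on_subset) (auto simp: supp_def)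
  moreover have "finite ?G" using FF_fin by (auto simp: supp_def)
  moreover have "z A0 \<noteq> 0" using A0(2) unfolding z_def by simp
  ultimately have "fv.dependent (chi ` ?G)"
    using coeffs_dep[of ?G A0 z] A0G by blast
  then show False using assms(4) by simp
qed

lemma Vals_fin: "finite Vals"
proof -
  define g where "g G = (\<Sum>A\<in>FF. (SOME y. exact y \<and> supp y = G) A)" for G
  have "Vals \<subseteq> g ` Pow FF"
  proof
    fix v assume "v \<in> Vals"
    then obtain y where y: "v = (\<Sum>A\<in>FF. y A)" "exact y" "fv.independent (chi ` supp y)"
      unfolding Vals_def by auto
    let ?y = "SOME y'. exact y' \<and> supp y' = supp y"
    have h: "exact ?y \<and> supp ?y = supp y"
      by (rule someI[where P="\<lambda>y'. exact y' \<and> supp y' = supp y"]) (use y in simp)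
    then have h1: "exact ?y" and h2: "supp y = supp ?y" by auto
    have "\<forall>A\<in>FF. y A = ?y A" using exact_unique[OF y(2) h1 h2 y(3)] .
    then have "v = g (supp y)" unfolding g_def y(1) by (intro sum.cong) auto
    moreover have "supp y \<in> Pow FF" unfolding supp_def by auto
    ultimately show "v \<in> g ` Pow FF" by blast
  qed
  moreover have "finite (g ` Pow FF)" using FF_fin by simp
  ultimately show ?thesis by (rule finite_subset)
qed

definition y0 :: "nat set \<Rightarrow> real" where
  "y0 A = (if \<exists>i. A = {i} then 1 else 0)"

lemma y0_exact: "exact y0"
  unfolding exact_def
proof (intro conjI allI ballI)
  fix A show "0 \<le> y0 A" by (simp add: y0_def)
next
  fix i
  have "(\<Sum>A\<in>FF. y0 A * chi A i) = (\<Sum>A\<in>FF. if A = {i} then 1 else 0)"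
  proof (rule sum.cong)
    fix A assume "A \<in> FF"
    show "y0 A * chi A i = (if A = {i} then 1 else 0)"
    proof (cases "\<exists>j. A = {j}")
      case True
      then obtain j where "A = {j}" by blast
      then show ?thesis by (auto simp: y0_def chi_def)
    next
      case False
      then show ?thesis by (auto simp: y0_def)
    qed
  qed simp
  also have "\<dots> = (if {i} \<in> FF then 1 else 0)" using FF_fin by simp
  also have "\<dots> = chi {1..n} i" using single_FF by (auto simp: chi_def FF_def)
  finally show "(\<Sum>A\<in>FF. y0 A * chi A i) = chi {1..n} i" .
qed

lemma exact_reduce:
  assumes "exact y"
  shows "\<exists>y'. exact y' \<and> fv.independent (chi ` supp y') \<and> (\<Sum>A\<in>FF. y' A) \<le> (\<Sum>A\<in>FF. y A)"
  using reduce[OF FF_fin FF_ne FF_inj, of y "chi {1..n}"] assms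
  unfolding exact_def supp_def by auto

lemma Vals_ne: "Vals \<noteq> {}"
  using exact_reduce[OF y0_exact] unfolding Vals_def by auto

definition V :: real where "V = Min Vals"

lemma V_le: "exact y \<Longrightarrow> V \<le> (\<Sum>A\<in>FF. y A)"
proof -
  assume "exact y"
  from exact_reduce[OF this] obtain y' where y': "exact y'" "fv.independent (chi ` supp y')"
    "(\<Sum>A\<in>FF. y' A) \<le> (\<Sum>A\<in>FF. y A)" by blast
  then have "(\<Sum>A\<in>FF. y' A) \<in> Vals" unfolding Vals_def by auto
  then have "V \<le> (\<Sum>A\<in>FF. y' A)" unfolding V_def using Vals_fin by simp
  then show ?thesis using y' by simp
qed

lemma V_attained: "\<exists>y. exact y \<and> fv.independent (chi ` supp y) \<and> (\<Sum>A\<in>FF. y A) = V"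
proof -
  have "V \<in> Vals" unfolding V_def using Vals_fin Vals_ne by simp
  then show ?thesis unfolding Vals_def by auto
qed

lemma exact_ge1: "exact y \<Longrightarrow> (\<Sum>A\<in>FF. y A) \<ge> 1"
proof -
  assume e: "exact y"
  have "1 = chi {1..n} 1" using n1 by (simp add: chi_def)
  also have "\<dots> = (\<Sum>A\<in>FF. y A * chi A 1)" using e unfolding exact_def by simp
  also have "\<dots> \<le> (\<Sum>A\<in>FF. y A)" using e unfolding exact_def
    by (intro sum_mono) (auto simp: chi_def)
  finally show ?thesis .
qed

lemma V_ge1: "V \<ge> 1"
proof -
  obtain y where "exact y" "(\<Sum>A\<in>FF. y A) = V" using V_attained by blast
  then show ?thesis using exact_ge1 by metis
qed


definition Sg :: "nat set set" where "Sg = (\<lambda>i. {i}) ` {1..n}"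

lemma Sg_FF: "Sg \<subseteq> FF" using single_FF by (auto simp: Sg_def)

lemma FF_sub: "A \<in> FF \<Longrightarrow> A \<subseteq> {1..n}" by (auto simp: FF_def)

lemma chi_span: assumes "A \<subseteq> {1..n}" shows "chi A \<in> fv.span (chi ` Sg)"
proof -
  have fin: "finite A" using assms finite_subset by blast
  have "chi A = (\<Sum>i\<in>A. chi {i})"
  proof
    fix x
    have "(\<Sum>i\<in>A. chi {i}) x = (\<Sum>i\<in>A. chi {i} x)" by (rule fun_sum_apply)
    also have "\<dots> = (\<Sum>i\<in>A. if x = i then 1 else 0)" by (intro sum.cong) (auto simp: chi_def)
    also have "\<dots> = chi A x" using fin by (simp add: chi_def)
    finally show "chi A x = (\<Sum>i\<in>A. chi {i}) x" by simp
  qed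
  also have "\<dots> \<in> fv.span (chi ` Sg)"
  proof (rule fv.span_sum)
    fix i assume "i \<in> A"
    then have "chi {i} \<in> chi ` Sg" using assms by (auto simp: Sg_def)
    then show "chi {i} \<in> fv.span (chi ` Sg)" by (rule fv.span_base)
  qed
  finally show ?thesis .
qed

lemma Sg_fin: "finite Sg" by (simp add: Sg_def)

lemma card_chi_Sg: "card (chi ` Sg) = n"
proof -
  have "card (chi ` Sg) = card Sg" using chi_inj by (simp add: card_image inj_on_subset)
  also have "\<dots> = card {1..n}" unfolding Sg_def by (rule card_image) (auto simp: inj_on_def)
  finally show ?thesis by simp
qed

lemma indep_Sg: "fv.independent (chi ` Sg)"
proof
  assume "fv.dependent (chi ` Sg)"
  then obtain z where z2: "\<exists>A\<in>Sg. z A \<noteq> 0" and z3: "\<forall>i. (\<Sum>A\<in>Sg. z A * chi A i) = 0"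
    using dep_coeffs[of Sg] chi_inj Sg_fin by (auto intro: inj_on_subset)
  then obtain j where j: "j \<in> {1..n}" "z {j} \<noteq> 0" by (auto simp: Sg_def)
  have "(\<Sum>A\<in>Sg. z A * chi A j) = (\<Sum>A\<in>Sg. if A = {j} then z A else 0)"
    by (intro sum.cong) (auto simp: Sg_def chi_def)
  also have "\<dots> = z {j}" using j Sg_fin by (simp add: Sg_def)
  finally show False using z3 j by simp
qed

lemma basis_ext:
  assumes G: "G \<subseteq> FF" and ind: "fv.independent (chi ` G)"
  shows "\<exists>G'. G \<subseteq> G' \<and> G' \<subseteq> FF \<and> card G' = n \<and> fv.independent (chi ` G')"
proof -
  obtain Bs where B1: "chi ` G \<subseteq> Bs" and B2: "Bs \<subseteq> chi ` (G \<union> Sg)" and B3: "fv.independent Bs"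
    and B4: "chi ` (G \<union> Sg) \<subseteq> fv.span Bs"
    using fv.maximal_independent_subset_extend[of "chi ` G" "chi ` (G \<union> Sg)"] ind by blast
  have "Bs \<subseteq> fv.span (chi ` Sg)"
  proof
    fix b assume "b \<in> Bs"
    then obtain A where "A \<in> G \<union> Sg" "b = chi A" using B2 by blast
    then show "b \<in> fv.span (chi ` Sg)" using chi_span FF_sub G Sg_FF by blast
  qed
  then have c1: "finite Bs" "card Bs \<le> n"
    using fv.independent_span_bound[of "chi ` Sg" Bs] B3 Sg_fin card_chi_Sg by auto
  have "chi ` Sg \<subseteq> fv.span Bs" using B4 by blast
  then have c2: "n \<le> card Bs"
    using fv.independent_span_bound[of Bs "chi ` Sg"] indep_Sg c1 card_chi_Sg by auto
  define G' where "G' = {A \<in> G \<union> Sg. chi A \<in> Bs}"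
  have "chi ` G' = Bs" using B2 unfolding G'_def by auto
  moreover have "inj_on chi G'" using chi_inj by (rule inj_on_subset) simp
  ultimately have "card G' = card Bs" using card_image by fastforce
  moreover have "G \<subseteq> G'" using B1 unfolding G'_def by auto
  moreover have "G' \<subseteq> FF" using G Sg_FF unfolding G'_def by auto
  ultimately show ?thesis using c1 c2 B3 \<open>chi ` G' = Bs\<close> by (intro exI[of _ G']) auto
qed


lemma det_part:
  assumes ex: "exact y" and ind: "fv.independent (chi ` supp y)"
  shows "\<exists>k cnt. k \<ge> 1 \<and> int k \<le> maxdet01 n \<and> (\<forall>A\<in>FF. real (cnt A) = real k * y A)"
proof -
  have suppF: "supp y \<subseteq> FF" by (auto simp: supp_def)
  obtain G' where G': "supp y \<subseteq> G'" "G' \<subseteq> FF" "card G' = n" "fv.independent (chi ` G')"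
    using basis_ext[OF suppF ind] by blast
  have finG': "finite G'" using G'(2) FF_fin finite_subset by blast
  obtain gs where gs: "set gs = G'" "distinct gs" using finite_distinct_list[OF finG'] by blast
  have len: "length gs = n" using gs G'(3) distinct_card by metis
  have bij: "bij_betw ((!) gs) {..<n} G'" using bij_betw_nth[OF gs(2)] len gs(1) by simp
  have gsF: "gs ! j \<in> FF" if "j < n" for j using gs(1) G'(2) len nth_mem that by blast
  define Mi :: "int mat" where "Mi = mat n n (\<lambda>(i,j). if Suc i \<in> gs ! j then 1 else 0)"
  define Mr where "Mr = map_mat real_of_int Mi"
  have Mic: "Mi \<in> carrier_mat n n" by (simp add: Mi_def)
  have Mrc: "Mr \<in> carrier_mat n n" by (simp add: Mr_def Mi_def)
  have Mr_ent: "Mr $$ (i,j) = chi (gs ! j) (Suc i)" if "i < n" "j < n" for i j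
    using that by (simp add: Mr_def Mi_def chi_def)
  have sum_reidx: "(\<Sum>A\<in>G'. f A) = (\<Sum>j<n. f (gs ! j))" for f :: "nat set \<Rightarrow> real"
    using sum.reindex_bij_betw[OF bij, of f] by simp
  have Mr_mult: "(Mr *\<^sub>v v) $ i = (\<Sum>j<n. v $ j * chi (gs ! j) (Suc i))"
    if i: "i < n" and vc: "v \<in> carrier_vec n" for i v
  proof -
    have "(Mr *\<^sub>v v) $ i = row Mr i \<bullet> v" using i Mrc by simp
    also have "\<dots> = (\<Sum>j\<in>{0..<n}. Mr $$ (i,j) * v $ j)" using i Mrc vc by (simp add: scalar_prod_def)
    also have "\<dots> = (\<Sum>j<n. v $ j * chi (gs ! j) (Suc i))"
      using i by (simp add: atLeast0LessThan Mr_ent mult.commute)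
    finally show ?thesis .
  qed
  have detne: "det Mr \<noteq> 0"
  proof
    assume "det Mr = 0"
    then obtain v where v: "v \<in> carrier_vec n" "v \<noteq> 0\<^sub>v n" "Mr *\<^sub>v v = 0\<^sub>v n"
      using det_0_iff_vec_prod_zero_field[OF Mrc] by blast
    have "\<not> (\<forall>j<n. v $ j = 0)"
    proof
      assume "\<forall>j<n. v $ j = 0"
      then have "v = 0\<^sub>v n" using v(1) by (intro eq_vecI) auto
      then show False using v(2) by simp
    qed
    then obtain j0 where j0: "j0 < n" "v $ j0 \<noteq> 0" by blast
    define z where "z A = v $ (the_inv_into {..<n} ((!) gs) A)" for A
    have zg: "z (gs ! j) = v $ j" if "j < n" for j
      using the_inv_into_f_f[OF bij_betw_imp_inj_on[OF bij]] that unfolding z_def by simp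
    have "\<forall>i. (\<Sum>A\<in>G'. z A * chi A i) = 0"
    proof
      fix i
      have "(\<Sum>A\<in>G'. z A * chi A i) = (\<Sum>j<n. z (gs ! j) * chi (gs ! j) i)" by (rule sum_reidx)
      also have "\<dots> = (\<Sum>j<n. v $ j * chi (gs ! j) i)" by (intro sum.cong) (auto simp: zg)
      also have "\<dots> = 0"
      proof (cases "i \<in> {1..n}")
        case True
        then have i1: "i - 1 < n" "Suc (i-1) = i" by auto
        then have "(Mr *\<^sub>v v) $ (i-1) = (\<Sum>j<n. v $ j * chi (gs ! j) i)"
          using Mr_mult[of "i-1" v] v(1) by simp
        moreover have "(Mr *\<^sub>v v) $ (i-1) = 0" using v(3) i1 by simp
        ultimately show ?thesis by simp
      next
        case False
        have "chi (gs!j) i = 0" if "j<n" for j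
        proof -
          have "i \<notin> gs ! j" using FF_sub[OF gsF[OF that]] False by blast
          then show ?thesis by (simp add: chi_def)
        qed
        then show ?thesis by simp
      qed
      finally show "(\<Sum>A\<in>G'. z A * chi A i) = 0" .
    qed
    moreover have "gs ! j0 \<in> G'" using j0 gs(1) len by auto
    moreover have "z (gs ! j0) \<noteq> 0" using zg j0 by simp
    moreover have "inj_on chi G'" using chi_inj inj_on_subset by blast
    ultimately have "fv.dependent (chi ` G')" using coeffs_dep[OF _ finG'] by blast
    then show False using G'(4) by simp
  qed
  define dl where "dl = det Mi"
  have detMr: "det Mr = real_of_int dl" unfolding Mr_def dl_def by simp
  have dl0: "dl \<noteq> 0" using detne detMr by simp
  define x where "x = vec n (\<lambda>j. y (gs ! j))"
  have xc: "x \<in> carrier_vec n" by (simp add: x_def)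
  have y0out: "y A = 0" if "A \<in> FF" "A \<notin> G'" for A using that G'(1) by (auto simp: supp_def)
  have Mx: "Mr *\<^sub>v x = vec n (\<lambda>_. 1)"
  proof (rule eq_vecI)
    fix i assume "i < dim_vec (vec n (\<lambda>_. 1::real))"
    then have i: "i < n" by simp
    have "(Mr *\<^sub>v x) $ i = (\<Sum>j<n. x $ j * chi (gs ! j) (Suc i))" using Mr_mult[OF i xc] .
    also have "\<dots> = (\<Sum>j<n. y (gs ! j) * chi (gs ! j) (Suc i))" by (intro sum.cong) (auto simp: x_def)
    also have "\<dots> = (\<Sum>A\<in>G'. y A * chi A (Suc i))" using sum_reidx by simp
    also have "\<dots> = (\<Sum>A\<in>FF. y A * chi A (Suc i))"
      using FF_fin G'(2) y0out by (intro sum.mono_neutral_left) auto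
    also have "\<dots> = chi {1..n} (Suc i)" using ex unfolding exact_def by simp
    also have "\<dots> = 1" using i by (simp add: chi_def)
    finally show "(Mr *\<^sub>v x) $ i = vec n (\<lambda>_. 1) $ i" using i by simp
  qed (use Mrc in simp)
  define one where "one = vec n (\<lambda>_. 1::int)"
  have dj: "y (gs ! j) * real_of_int dl = real_of_int (det (replace_col Mi one j))" if j: "j < n" for j
  proof -
    have "replace_col Mr (Mr *\<^sub>v x) j = map_mat real_of_int (replace_col Mi one j)"
      unfolding Mx by (rule eq_matI) (auto simp: replace_col_def Mr_def one_def Mi_def)
    then have "det (replace_col Mr (Mr *\<^sub>v x) j) = real_of_int (det (replace_col Mi one j))" by simp
    moreover have "det (replace_col Mr (Mr *\<^sub>v x) j) = x $ j * det Mr" by (rule cramer_lemma_mat[OF Mrc xc j])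
    ultimately show ?thesis using j detMr by (simp add: x_def)
  qed
  define k where "k = nat \<bar>dl\<bar>"
  have k1: "k \<ge> 1" using dl0 unfolding k_def by simp
  have rk: "real k = \<bar>real_of_int dl\<bar>" unfolding k_def by simp
  define cnt where "cnt A = nat \<lfloor>real k * y A\<rfloor>" for A
  have "\<forall>A\<in>FF. real (cnt A) = real k * y A"
  proof
    fix A assume A: "A \<in> FF"
    show "real (cnt A) = real k * y A"
    proof (cases "A \<in> G'")
      case True
      then obtain j where j: "j < n" "A = gs ! j" using gs(1) len by (metis in_set_conv_nth)
      have yA: "y A \<ge> 0" using ex A unfolding exact_def by simp
      have "real k * y A = \<bar>real_of_int dl * y A\<bar>" using yA rk by (simp add: abs_mult)
      also have "\<dots> = real_of_int \<bar>det (replace_col Mi one j)\<bar>" using dj[OF j(1)] j(2) by (simp add: mult.commute)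
      finally have e: "real k * y A = real_of_int \<bar>det (replace_col Mi one j)\<bar>" .
      show ?thesis unfolding cnt_def e by simp
    next
      case False
      then show ?thesis using y0out A unfolding cnt_def by simp
    qed
  qed
  moreover have "int k \<le> maxdet01 n"
  proof -
    have "Mi \<in> Z01 n" using Mic by (auto simp: Z01_def Mi_def)
    then have "\<bar>dl\<bar> \<le> maxdet01 n" using det_bound n1 unfolding dl_def by blast
    then show ?thesis unfolding k_def using dl0 by simp
  qed
  ultimately show ?thesis using k1 by blast
qed


lemma feas_sub: "B \<subseteq> A \<Longrightarrow> feasible_set S D n A \<Longrightarrow> feasible_set S D n B"
proof -
  assume BA: "B \<subseteq> A" and fA: "feasible_set S D n A"
  have A1: "A \<subseteq> {1..n}" using fA by (simp add: feasible_set_def)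
  have fin: "finite A" using A1 finite_subset by blast
  have "(\<Sum>i\<in>B. D i) \<le> (\<Sum>i\<in>A. D i)"
    using Dpos A1 BA fin by (intro sum_mono2) (auto intro: less_imp_le)
  then show ?thesis using fA BA A1 by (auto simp: feasible_set_def)
qed

lemma feas_FF: "feasible_set S D n A \<Longrightarrow> A \<noteq> {} \<Longrightarrow> A \<in> FF"
  by (simp add: feasible_set_def FF_def)

lemma sum_list_ones: "sum_list (map (\<lambda>_. (1::real)) xs) = real (length xs)"
  by (induction xs) auto

lemma list_to_exact:
  assumes nn: "\<forall>p\<in>set ys. fst p \<ge> 0" and fe: "\<forall>p\<in>set ys. feasible_set S D n (snd p)"
    and cv: "\<forall>i\<in>{1..n}. conn_time ys i = 1"
  shows "V \<le> sum_list (map fst ys)"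
proof -
  define y where "y A = sum_list (map fst (filter (\<lambda>p. snd p = A) ys))" for A
  have ex: "exact y"
    unfolding exact_def
  proof (intro conjI ballI allI)
    fix A show "0 \<le> y A" unfolding y_def using nn by (intro sum_list_nonneg) auto
  next
    fix i
    have "(\<Sum>A\<in>FF. y A * chi A i) = sum_list (map (\<lambda>p. fst p * chi (snd p) i) (filter (\<lambda>p. snd p \<in> FF) ys))"
      unfolding y_def by (rule regroup_pairs[OF FF_fin])
    also have "\<dots> = sum_list (map (\<lambda>p. fst p * chi (snd p) i) ys)"
    proof (rule smf)
      fix p assume "p \<in> set ys" "snd p \<notin> FF"
      then have "snd p = {}" using fe feas_FF by blast
      then show "fst p * chi (snd p) i = 0" by (simp add: chi_def)
    qed
    also have "\<dots> = chi {1..n} i"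
    proof (cases "i \<in> {1..n}")
      case True
      then show ?thesis using cv by (simp add: chi_def conn_chi)
    next
      case False
      have "sum_list (map (\<lambda>p. fst p * chi (snd p) i) (filter (\<lambda>_. False) ys)) =
            sum_list (map (\<lambda>p. fst p * chi (snd p) i) ys)"
      proof (rule smf)
        fix p assume "p \<in> set ys"
        then have "snd p \<subseteq> {1..n}" using fe by (auto simp: feasible_set_def)
        then have "i \<notin> snd p" using False by blast
        then show "fst p * chi (snd p) i = 0" by (simp add: chi_def)
      qed
      then show ?thesis using False by (simp add: chi_def)
    qed
    finally show "(\<Sum>A\<in>FF. y A * chi A i) = chi {1..n} i" .
  qed
  have "(\<Sum>A\<in>FF. y A) = (\<Sum>A\<in>FF. y A * (\<lambda>_. 1) A)" by simp
  also have "\<dots> = sum_list (map (\<lambda>p. fst p * (\<lambda>_. 1) (snd p)) (filter (\<lambda>p. snd p \<in> FF) ys))"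
    unfolding y_def by (rule regroup_pairs[OF FF_fin])
  also have "\<dots> = sum_list (map fst (filter (\<lambda>p. snd p \<in> FF) ys))" by simp
  also have "\<dots> \<le> sum_list (map fst ys)" using nn by (intro smf_le) auto
  finally show ?thesis using V_le[OF ex] by simp
qed

lemma sched_bound:
  assumes T: "T > 0" and sch: "is_schedule S D n T sch"
  shows "(MIN i\<in>{1..n}. conn_time sch i) / T \<le> 1 / V"
proof -
  define t where "t = (MIN i\<in>{1..n}. conn_time sch i) / T"
  have V1: "V \<ge> 1" by (rule V_ge1)
  have iV: "1 / V > 0" using V1 by simp
  show ?thesis
  proof (cases "t \<le> 0")
    case True
    then show ?thesis using iV unfolding t_def by linarith
  next
    case False
    then have tp: "t > 0" by simp
    define c where "c = 1 / (t * T)"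
    have cp: "c > 0" using tp T unfolding c_def by simp
    define xs where "xs = map (\<lambda>(l,A). (c * l, A)) sch"
    have sch1: "\<forall>p\<in>set sch. fst p > 0 \<and> feasible_set S D n (snd p)"
      using sch unfolding is_schedule_def by auto
    have sch2: "sum_list (map fst sch) = T" using sch unfolding is_schedule_def by auto
    have nn: "\<forall>p\<in>set xs. fst p \<ge> 0"
      using sch1 cp unfolding xs_def by (auto simp: less_imp_le)
    have tT: "t * T = (MIN i\<in>{1..n}. conn_time sch i)" unfolding t_def using T by simp
    have cov: "\<forall>i\<in>{1..n}. conn_time xs i \<ge> 1"
    proof
      fix i assume i: "i \<in> {1..n}"
      have "t * T \<le> conn_time sch i" unfolding tT using i by (intro Min_le) auto
      then have "c * (t * T) \<le> c * conn_time sch i" using cp by (intro mult_left_mono) auto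
      moreover have "c * (t * T) = 1" unfolding c_def using tp T by simp
      ultimately show "conn_time xs i \<ge> 1" unfolding xs_def conn_scale by simp
    qed
    obtain ys where ys: "\<forall>p\<in>set ys. fst p \<ge> 0" "sum_list (map fst ys) = sum_list (map fst xs)"
      "\<forall>p\<in>set ys. \<exists>q\<in>set xs. snd p \<subseteq> snd q" "\<forall>i\<in>{1..n}. i \<le> n \<longrightarrow> conn_time ys i = 1"
      using exactify_aux[OF nn cov, of n] by blast
    have fe: "\<forall>p\<in>set ys. feasible_set S D n (snd p)"
    proof
      fix p assume "p \<in> set ys"
      then obtain q where q: "q \<in> set xs" "snd p \<subseteq> snd q" using ys(3) by blast
      then obtain r where "r \<in> set sch" "snd q = snd r" unfolding xs_def by auto
      then have "feasible_set S D n (snd q)" using sch1 by auto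
      then show "feasible_set S D n (snd p)" using q(2) feas_sub by blast
    qed
    have cv: "\<forall>i\<in>{1..n}. conn_time ys i = 1" using ys(4) by auto
    have "V \<le> sum_list (map fst xs)" using list_to_exact[OF ys(1) fe cv] ys(2) by simp
    also have "\<dots> = c * T" unfolding xs_def val_scale sch2 ..
    also have "\<dots> = 1 / t" unfolding c_def using T by simp
    finally have "V \<le> 1 / t" .
    then have "V * t \<le> 1" using tp by (simp add: field_simps)
    then have "t \<le> 1 / V" using V1 by (simp add: field_simps)
    then show ?thesis unfolding t_def .
  qed
qed

lemma packing_lower:
  assumes k: "k \<ge> 1" and B: "is_k_packing S D n k B"
  shows "real k * V \<le> real (length B)"
proof -
  have Bf: "\<forall>b\<in>set B. feasible_set S D n b" using B unfolding is_k_packing_def by blast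
  have Bk: "\<forall>i\<in>{1..n}. card {j. j < length B \<and> i \<in> B ! j} = k" using B unfolding is_k_packing_def by blast
  have lenk: "length (filter (\<lambda>b. i \<in> b) B) = k" if "i \<in> {1..n}" for i
    using Bk that by (simp add: length_filter_conv_card)
  define y where "y A = real (count_list B A) / real k" for A
  have kp: "real k > 0" using k by simp
  have filt: "sum_list (map f (filter (\<lambda>b. b \<in> FF) B)) = sum_list (map f B)"
    if "f {} = 0" for f :: "nat set \<Rightarrow> real"
  proof (rule smf)
    fix b assume "b \<in> set B" "b \<notin> FF"
    then have "b = {}" using Bf feas_FF by blast
    then show "f b = 0" using that by simp
  qed
  have ex: "exact y"
    unfolding exact_def
  proof (intro conjI ballI allI)
    fix A show "0 \<le> y A" unfolding y_def by simp
  next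
    fix i
    have "(\<Sum>A\<in>FF. y A * chi A i) = (1 / real k) * (\<Sum>A\<in>FF. real (count_list B A) * chi A i)"
      unfolding y_def by (simp add: sum_distrib_left)
    also have "\<dots> = (1 / real k) * sum_list (map (\<lambda>b. chi b i) (filter (\<lambda>b. b \<in> FF) B))"
      by (simp add: regroup_count[OF FF_fin])
    also have "\<dots> = (1 / real k) * sum_list (map (\<lambda>b. chi b i) B)"
      using filt[of "\<lambda>b. chi b i"] by (simp add: chi_def)
    also have "\<dots> = (1 / real k) * real (length (filter (\<lambda>b. i \<in> b) B))" by (simp add: chi_list)
    also have "\<dots> = chi {1..n} i"
    proof (cases "i \<in> {1..n}")
      case True
      then show ?thesis using lenk kp by (simp add: chi_def)
    next
      case False
      have "\<forall>b\<in>set B. i \<notin> b"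
      proof
        fix b assume "b \<in> set B"
        then have "b \<subseteq> {1..n}" using Bf by (auto simp: feasible_set_def)
        then show "i \<notin> b" using False by blast
      qed
      then have "filter (\<lambda>b. i \<in> b) B = []" unfolding filter_empty_conv by blast
      then show ?thesis using False by (simp add: chi_def)
    qed
    finally show "(\<Sum>A\<in>FF. y A * chi A i) = chi {1..n} i" .
  qed
  have "(\<Sum>A\<in>FF. y A) = (1 / real k) * (\<Sum>A\<in>FF. real (count_list B A) * (\<lambda>_. 1) A)"
    unfolding y_def by (simp add: sum_distrib_left)
  also have "\<dots> = (1 / real k) * sum_list (map (\<lambda>_. 1) (filter (\<lambda>b. b \<in> FF) B))"
    by (simp only: regroup_count[OF FF_fin])
  also have "\<dots> = (1 / real k) * real (length (filter (\<lambda>b. b \<in> FF) B))" by (simp add: sum_list_ones)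
  also have "\<dots> \<le> (1 / real k) * real (length B)" using kp by (intro mult_left_mono) auto
  finally have "V \<le> (1 / real k) * real (length B)" using V_le[OF ex] by simp
  then show ?thesis using kp by (simp add: field_simps)
qed

lemma packing_build:
  assumes ex: "exact y" and yV: "(\<Sum>A\<in>FF. y A) = V" and k: "k \<ge> 1"
    and cnt: "\<forall>A\<in>FF. real (cnt A) = real k * y A"
  shows "\<exists>B. is_k_packing S D n k B \<and> real (length B) = real k * V"
proof -
  obtain fs where fs: "set fs = FF" "distinct fs" using finite_distinct_list[OF FF_fin] by blast
  define B where "B = concat (map (\<lambda>A. replicate (cnt A) A) fs)"
  have setB: "set B \<subseteq> FF" unfolding B_def using fs by auto
  have lenP: "length (filter P B) = (\<Sum>A\<in>FF. if P A then cnt A else 0)" for P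
  proof -
    have "length (filter P B) = sum_list (map (\<lambda>A. length (filter P (replicate (cnt A) A))) fs)"
      unfolding B_def by (simp add: filter_concat length_concat comp_def)
    also have "\<dots> = sum_list (map (\<lambda>A. if P A then cnt A else 0) fs)"
      by (rule arg_cong[where f=sum_list], rule map_cong) (auto simp: filter_replicate)
    also have "\<dots> = (\<Sum>A\<in>FF. if P A then cnt A else 0)"
      using sum.distinct_set_conv_list[OF fs(2), of "\<lambda>A. if P A then cnt A else 0"] fs(1) by simp
    finally show ?thesis .
  qed
  have cov: "length (filter (\<lambda>b. i \<in> b) B) = k" if i: "i \<in> {1..n}" for i
  proof -
    have "real (length (filter (\<lambda>b. i \<in> b) B)) = (\<Sum>A\<in>FF. if i \<in> A then real (cnt A) else 0)"
      unfolding lenP of_nat_sum by (intro sum.cong) auto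
    also have "\<dots> = (\<Sum>A\<in>FF. real k * (y A * chi A i))"
      using cnt by (intro sum.cong) (auto simp: chi_def)
    also have "\<dots> = real k * chi {1..n} i" using ex unfolding exact_def by (simp add: sum_distrib_left[symmetric])
    also have "\<dots> = real k" using i by (simp add: chi_def)
    finally show ?thesis by simp
  qed
  have "is_k_packing S D n k B"
    unfolding is_k_packing_def
  proof (intro conjI ballI)
    fix b assume "b \<in> set B"
    then have "b \<in> FF" using setB by blast
    then show "feasible_set S D n b" by (simp add: FF_def feasible_set_def)
  next
    fix i assume "i \<in> {1..n}"
    then show "card {j. j < length B \<and> i \<in> B ! j} = k"
      using cov by (simp add: length_filter_conv_card)
  qed
  moreover have "real (length B) = real k * V"
  proof -
    have "length B = length (filter (\<lambda>_. True) B)" by simp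
    then have "real (length B) = (\<Sum>A\<in>FF. real (cnt A))" unfolding lenP by simp
    also have "\<dots> = (\<Sum>A\<in>FF. real k * y A)" using cnt by (intro sum.cong) auto
    also have "\<dots> = real k * V" unfolding sum_distrib_left[symmetric] yV ..
    finally show ?thesis .
  qed
  ultimately show ?thesis by blast
qed

theorem main:
  assumes T: "T > 0"
  shows "\<exists>k::nat. 1 \<le> k \<and> int k \<le> maxdet01 n \<and>
           egal_conn_time S D n T = real k / real (OPT S D n k) \<and>
           (\<forall>B. is_k_packing S D n k B \<and> length B = OPT S D n k \<longrightarrow>
              (let sch = map (\<lambda>b. (T / real (length B), b)) B in
                 is_schedule S D n T sch \<and>
                 (MIN i\<in>{1..n}. conn_time sch i) / T = egal_conn_time S D n T))"
proof -
  obtain y where y: "exact y" "fv.independent (chi ` supp y)" "(\<Sum>A\<in>FF. y A) = V"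
    using V_attained by blast
  obtain k cnt where kc: "k \<ge> 1" "int k \<le> maxdet01 n" "\<forall>A\<in>FF. real (cnt A) = real k * y A"
    using det_part[OF y(1,2)] by blast
  obtain B0 where B0: "is_k_packing S D n k B0" "real (length B0) = real k * V"
    using packing_build[OF y(1) y(3) kc(1) kc(3)] by blast
  define m where "m = OPT S D n k"
  have exB0: "\<exists>B. is_k_packing S D n k B \<and> length B = length B0" using B0 by blast
  have m_le: "m \<le> length B0" unfolding m_def OPT_def by (rule Least_le) (rule exB0)
  have "\<exists>B. is_k_packing S D n k B \<and> length B = m"
    unfolding m_def OPT_def by (rule LeastI[of _ "length B0"]) (rule exB0)
  then obtain B1 where B1: "is_k_packing S D n k B1" "length B1 = m" by blast
  have "real k * V \<le> real m" using packing_lower[OF kc(1) B1(1)] B1(2) by simp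
  moreover have "real m \<le> real k * V" using m_le B0(2) by linarith
  ultimately have mV: "real m = real k * V" by simp
  have V1: "V \<ge> 1" by (rule V_ge1)
  have kp: "real k \<ge> 1" using kc(1) by simp
  have mpos: "real m > 0" using mV V1 kp by (simp add: mult_pos_pos)
  have kmV: "real k / real m = 1 / V" using mV kp V1 by (simp add: field_simps)
  have schB: "is_schedule S D n T (map (\<lambda>b. (T / real (length B), b)) B) \<and>
     (MIN i\<in>{1..n}. conn_time (map (\<lambda>b. (T / real (length B), b)) B) i) / T = real k / real m"
    if B: "is_k_packing S D n k B" "length B = m" for B
  proof -
    let ?sch = "map (\<lambda>b. (T / real (length B), b)) B"
    have Bf: "\<forall>b\<in>set B. feasible_set S D n b" using B unfolding is_k_packing_def by blast
    have Bk: "\<forall>i\<in>{1..n}. card {j. j < length B \<and> i \<in> B ! j} = k" using B unfolding is_k_packing_def by blast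
    have lenk: "length (filter (\<lambda>b. i \<in> b) B) = k" if "i \<in> {1..n}" for i
      using Bk that by (simp add: length_filter_conv_card)
    have "is_schedule S D n T ?sch"
      unfolding is_schedule_def
    proof
      show "\<forall>(l, A)\<in>set ?sch. 0 < l \<and> feasible_set S D n A" using Bf mpos T B(2) by auto
      show "sum_list (map fst ?sch) = T" unfolding val_const using mpos B(2) by simp
    qed
    moreover have "(\<lambda>i. conn_time ?sch i) ` {1..n} = {T / real m * real k}"
    proof -
      have "\<forall>i\<in>{1..n}. conn_time ?sch i = T / real m * real k"
        using lenk B(2) by (simp add: conn_const)
      moreover have "{1..n} \<noteq> {}" using n1 by simp
      ultimately show ?thesis by auto
    qed
    then have "(MIN i\<in>{1..n}. conn_time ?sch i) = T / real m * real k" by simp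
    then have "(MIN i\<in>{1..n}. conn_time ?sch i) / T = real k / real m" using T by simp
    ultimately show ?thesis by simp
  qed
  have egal: "egal_conn_time S D n T = real k / real m"
    unfolding egal_conn_time_def
  proof (rule cSup_eq_maximum)
    show "real k / real m \<in> {(MIN i\<in>{1..n}. conn_time sch i) / T |sch. is_schedule S D n T sch}"
    proof (rule CollectI, rule exI[of _ "map (\<lambda>b. (T / real (length B1), b)) B1"])
      show "real k / real m = (MIN i\<in>{1..n}. conn_time (map (\<lambda>b. (T / real (length B1), b)) B1) i) / T \<and>
        is_schedule S D n T (map (\<lambda>b. (T / real (length B1), b)) B1)"
        using schB[OF B1] by simp
    qed
  next
    fix x assume "x \<in> {(MIN i\<in>{1..n}. conn_time sch i) / T |sch. is_schedule S D n T sch}"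
    then obtain sch where "is_schedule S D n T sch" "x = (MIN i\<in>{1..n}. conn_time sch i) / T" by blast
    then show "x \<le> real k / real m" using sched_bound[OF T] kmV by simp
  qed
  show ?thesis
  proof (intro exI[of _ k] conjI allI impI)
    show "1 \<le> k" using kc(1) .
    show "int k \<le> maxdet01 n" using kc(2) .
    show "egal_conn_time S D n T = real k / real (OPT S D n k)" using egal unfolding m_def .
  next
    fix B assume "is_k_packing S D n k B \<and> length B = OPT S D n k"
    then have "is_k_packing S D n k B" "length B = m" unfolding m_def by auto
    then show "let sch = map (\<lambda>b. (T / real (length B), b)) B in
                 is_schedule S D n T sch \<and>
                 (MIN i\<in>{1..n}. conn_time sch i) / T = egal_conn_time S D n T"
      using schB egal unfolding Let_def by simp
  qed
qed

end

theorem theorem1: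
  fixes S T :: real and D :: "nat \<Rightarrow> real" and n :: nat
  assumes "S > 0" and "T > 0" and "n \<ge> 1"
    and "\<forall>i\<in>{1..n}. 0 < D i \<and> D i \<le> S"
  shows "\<exists>k::nat. 1 \<le> k \<and> int k \<le> maxdet01 n \<and>
           egal_conn_time S D n T = real k / real (OPT S D n k) \<and>
           (\<forall>B. is_k_packing S D n k B \<and> length B = OPT S D n k \<longrightarrow>
              (let sch = map (\<lambda>b. (T / real (length B), b)) B in
                 is_schedule S D n T sch \<and>
                 (MIN i\<in>{1..n}. conn_time sch i) / T = egal_conn_time S D n T))"
proof -
  interpret inst S D n using assms by unfold_locales auto
  show ?thesis using main[OF assms(2)] .
qed

end
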